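(* Let $X$ be a real Banach space and let $g:X^*\to(-\infty,+\infty]$ be a proper convex weak$^*$-lower semicontinuous function. If $x^*\in X^*$ satisfies $\inf_{X^*}g<g(x^* )$, then there exist $z^*\in\operatorname{dom} g$ and $z\in\partial g(z^* )\cap X$ such that $g(z^* )<g(x^* )$ and $\langle z,x^*-z^*\rangle>0$.
   Context: $X$ is identified with its canonical image in $X^{**}$. Proper means $g>-\infty$ everywhere and $\operatorname{dom} g=\{g<+\infty\}\ne\emptyset$. For $z^*\in\operatorname{dom} g$, $\partial g(z^* )\cap X=\{z\in X:\langle y^*-z^*,z\rangle\le g(y^* )-g(z^* )\ \forall y^*\in X^*\}$. *)

theory Defs
  imports "HOL-Analysis.Analysis"
begin

text \<open>The dual space X* of a real Banach space X is modelled as the type of bounded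
  linear functionals 'a \<Rightarrow>L real; the pairing is blinfun_apply.\<close>

definition weak_star_topology :: "('a::real_normed_vector \<Rightarrow>\<^sub>L real) topology" where
  "weak_star_topology =
     pullback_topology UNIV (\<lambda>f. blinfun_apply f) (product_topology (\<lambda>_. euclideanreal) UNIV)"

definition weak_star_lsc :: "('a::real_normed_vector \<Rightarrow>\<^sub>L real \<Rightarrow> ereal) \<Rightarrow> bool" where
  "weak_star_lsc g \<longleftrightarrow> (\<forall>c::real. closedin weak_star_topology {y. g y \<le> ereal c})"

definition proper_fun :: "('b \<Rightarrow> ereal) \<Rightarrow> bool" where
  "proper_fun g \<longleftrightarrow> (\<forall>y. g y \<noteq> -\<infinity>) \<and> (\<exists>y. g y < \<infinity>)"

definition convex_ereal :: "('b::real_vector \<Rightarrow> ereal) \<Rightarrow> bool" where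
  "convex_ereal g \<longleftrightarrow>
     (\<forall>x y. \<forall>t::real. 0 < t \<and> t < 1 \<longrightarrow>
        g (t *\<^sub>R x + (1 - t) *\<^sub>R y) \<le> ereal t * g x + ereal (1 - t) * g y)"

definition dom_fun :: "('b \<Rightarrow> ereal) \<Rightarrow> 'b set" where
  "dom_fun g = {y. g y < \<infinity>}"

text \<open>Subdifferential of g at z* intersected with X (the canonical image in X**).\<close>
definition subdiff_X :: "('a::real_normed_vector \<Rightarrow>\<^sub>L real \<Rightarrow> ereal) \<Rightarrow> ('a \<Rightarrow>\<^sub>L real) \<Rightarrow> 'a set" where
  "subdiff_X g zs = {z. \<forall>ys. ereal (blinfun_apply (ys - zs) z) \<le> g ys - g zs}"

end

theory Submission
  imports Defs "HOL-Analysis.Analysis"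
begin


definition okG :: "('v::real_vector \<Rightarrow> real) \<Rightarrow> ('v \<times> real) set \<Rightarrow> bool" where
  "okG p G \<longleftrightarrow> (\<forall>x a y b. (x,a)\<in>G \<longrightarrow> (y,b)\<in>G \<longrightarrow> (x+y, a+b) \<in> G) \<and>
     (\<forall>x a t. (x,a)\<in>G \<longrightarrow> (t *\<^sub>R x, t*a) \<in> G) \<and>
     (\<forall>x a b. (x,a)\<in>G \<longrightarrow> (x,b)\<in>G \<longrightarrow> a = b) \<and>
     (\<forall>x a. (x,a)\<in>G \<longrightarrow> a \<le> p x)"

lemma HB_ext:
  fixes p :: "'v::real_vector \<Rightarrow> real"
  assumes sub: "\<And>x y. p (x + y) \<le> p x + p y"
    and hom: "\<And>t x. t \<ge> 0 \<Longrightarrow> p (t *\<^sub>R x) = t * p x"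
    and a1: "a \<le> p v0" and a2: "-a \<le> p (-v0)"
  shows "\<exists>L. linear L \<and> (\<forall>x. L x \<le> p x) \<and> L v0 = a"
proof -
  have p0: "p 0 = 0" using hom[of 0 0] by simp
  define G0 where "G0 = {(t *\<^sub>R v0, t * a) | t. True}"
  have okG0: "okG p G0"
  proof (cases "v0 = 0")
    case True
    then have "a = 0" using a1 a2 p0 by simp
    then show ?thesis using True p0 unfolding okG_def G0_def by auto
  next
    case False
    have dom: "t * a \<le> p (t *\<^sub>R v0)" for t
    proof (cases "t \<ge> 0")
      case True then show ?thesis using hom[OF True, of v0] a1 by (simp add: mult_left_mono)
    next
      case False
      then have "p (t *\<^sub>R v0) = (-t) * p (-v0)" using hom[of "-t" "-v0"] by simp
      moreover have "(-t) * (-a) \<le> (-t) * p (-v0)" using mult_left_mono[OF a2, of "-t"] False by simp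
      ultimately show ?thesis by simp
    qed
    show ?thesis unfolding okG_def G0_def
    proof (intro conjI allI impI)
      fix x aa b assume "(x,aa) \<in> {(t *\<^sub>R v0, t * a) |t. True}" "(x,b) \<in> {(t *\<^sub>R v0, t * a) |t. True}"
      then obtain t1 t2 where "(x,aa) = (t1 *\<^sub>R v0, t1 * a)" "(x,b) = (t2 *\<^sub>R v0, t2 * a)" by blast
      then show "aa = b" using False by (metis prod.inject scaleR_cancel_right)
    next
      fix x aa y b assume "(x,aa) \<in> {(t *\<^sub>R v0, t * a) |t. True}" "(y,b) \<in> {(t *\<^sub>R v0, t * a) |t. True}"
      then obtain t1 t2 where "(x,aa) = (t1 *\<^sub>R v0, t1 * a)" "(y,b) = (t2 *\<^sub>R v0, t2 * a)" by blast
      then show "(x + y, aa + b) \<in> {(t *\<^sub>R v0, t * a) |t. True}"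
        by (intro CollectI exI[of _ "t1+t2"]) (auto simp: algebra_simps)
    next
      fix x aa t assume "(x,aa) \<in> {(t *\<^sub>R v0, t * a) |t. True}"
      then obtain t1 where "(x,aa) = (t1 *\<^sub>R v0, t1 * a)" by blast
      then show "(t *\<^sub>R x, t * aa) \<in> {(t *\<^sub>R v0, t * a) |t. True}"
        by (intro CollectI exI[of _ "t*t1"]) (auto simp: algebra_simps)
    next
      fix x aa assume "(x,aa) \<in> {(t *\<^sub>R v0, t * a) |t. True}"
      then obtain t1 where "(x,aa) = (t1 *\<^sub>R v0, t1 * a)" by blast
      then show "aa \<le> p x" using dom by auto
    qed
  qed
  define A where "A = {G. G0 \<subseteq> G \<and> okG p G}"
  have "\<forall>C\<in>chains A. \<exists>U\<in>A. \<forall>X\<in>C. X \<subseteq> U"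
  proof
    fix C assume C: "C \<in> chains A"
    show "\<exists>U\<in>A. \<forall>X\<in>C. X \<subseteq> U"
    proof (cases "C = {}")
      case True then show ?thesis using okG0 unfolding A_def by auto
    next
      case False
      have CA: "C \<subseteq> A" and ch: "\<And>X Y. X \<in> C \<Longrightarrow> Y \<in> C \<Longrightarrow> X \<subseteq> Y \<or> Y \<subseteq> X"
        using C unfolding chains_def chain_subset_def by auto
      have two: "\<exists>G\<in>C. P \<in> G \<and> Q \<in> G" if "P \<in> \<Union>C" "Q \<in> \<Union>C" for P Q
        using that ch by blast
      have okC: "okG p G" if "G \<in> C" for G using that CA unfolding A_def by auto
      have "okG p (\<Union>C)" unfolding okG_def
      proof (intro conjI allI impI)
        fix x aa y b assume "(x,aa) \<in> \<Union>C" "(y,b) \<in> \<Union>C"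
        then obtain G where "G \<in> C" "(x,aa) \<in> G" "(y,b) \<in> G" using two by blast
        then show "(x+y, aa+b) \<in> \<Union>C" using okC unfolding okG_def by blast
      next
        fix x aa t assume "(x,aa) \<in> \<Union>C"
        then show "(t *\<^sub>R x, t*aa) \<in> \<Union>C" using okC unfolding okG_def by blast
      next
        fix x aa b assume "(x,aa) \<in> \<Union>C" "(x,b) \<in> \<Union>C"
        then obtain G where "G \<in> C" "(x,aa) \<in> G" "(x,b) \<in> G" using two by blast
        then show "aa = b" using okC unfolding okG_def by blast
      next
        fix x aa assume "(x,aa) \<in> \<Union>C"
        then show "aa \<le> p x" using okC unfolding okG_def by blast
      qed
      moreover have "G0 \<subseteq> \<Union>C" using False CA unfolding A_def by auto
      ultimately show ?thesis unfolding A_def by blast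
    qed
  qed
  from Zorn_Lemma2[OF this] obtain M where MA: "M \<in> A" and Mmax: "\<And>X. X \<in> A \<Longrightarrow> M \<subseteq> X \<Longrightarrow> X = M"
    by blast
  have okM: "okG p M" and G0M: "G0 \<subseteq> M" using MA unfolding A_def by auto
  have Madd: "\<And>x a y b. (x,a)\<in>M \<Longrightarrow> (y,b)\<in>M \<Longrightarrow> (x+y, a+b) \<in> M"
    and Msc: "\<And>x a t. (x,a)\<in>M \<Longrightarrow> (t *\<^sub>R x, t*a) \<in> M"
    and Mfun: "\<And>x a b. (x,a)\<in>M \<Longrightarrow> (x,b)\<in>M \<Longrightarrow> a = b"
    and Mdom: "\<And>x a. (x,a)\<in>M \<Longrightarrow> a \<le> p x" using okM unfolding okG_def by blast+
  have M00: "(0,0) \<in> M" using Msc[of v0 a 0] G0M unfolding G0_def by force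
  have total: "\<exists>b. (v,b) \<in> M" for v
  proof (rule ccontr)
    assume nv: "\<nexists>b. (v, b) \<in> M"
    define L where "L = {b - p (s - v) | s b. (s,b) \<in> M}"
    have Lne: "L \<noteq> {}" using M00 unfolding L_def by auto
    have Lub: "l \<le> p (s' + v) - b'" if "l \<in> L" "(s',b') \<in> M" for l s' b'
    proof -
      obtain s b where l: "l = b - p (s - v)" "(s,b) \<in> M" using \<open>l \<in> L\<close> unfolding L_def by auto
      have "b + b' \<le> p (s + s')" using Madd[OF l(2) that(2)] Mdom by blast
      also have "\<dots> \<le> p (s - v) + p (s' + v)" using sub[of "s - v" "s' + v"] by simp
      finally show ?thesis using l by simp
    qed
    have bdd: "bdd_above L" using Lub M00 unfolding bdd_above_def by blast
    define c where "c = Sup L"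
    have c1: "b - p (s - v) \<le> c" if "(s,b) \<in> M" for s b
      unfolding c_def using that bdd by (intro cSup_upper) (auto simp: L_def)
    have c2: "c \<le> p (s' + v) - b'" if "(s',b') \<in> M" for s' b'
      unfolding c_def using that Lne by (intro cSup_least) (auto simp: Lub)
    define M' where "M' = {(s + t *\<^sub>R v, b + t * c) | s b t. (s,b) \<in> M}"
    have key: "t = t'" if "(s,b) \<in> M" "(s',b') \<in> M" "s + t *\<^sub>R v = s' + t' *\<^sub>R v" for s b s' b' t t'
    proof (rule ccontr)
      assume "t \<noteq> t'"
      have "(s + (-1) *\<^sub>R s', b + (-1) * b') \<in> M" using Madd[OF that(1) Msc[OF that(2)]] .
      then have "((1/(t'-t)) *\<^sub>R (s - s'), (1/(t'-t)) * (b - b')) \<in> M" using Msc[of "s + (-1) *\<^sub>R s'" "b + (-1) * b'" "1/(t'-t)"] by simp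
      moreover have "s - s' = (t' - t) *\<^sub>R v" using that(3) by (simp add: algebra_simps)
      ultimately show False using nv \<open>t \<noteq> t'\<close> by auto
    qed
    have "okG p M'" unfolding okG_def
    proof (intro conjI allI impI)
      fix x aa y b assume "(x,aa) \<in> M'" "(y,b) \<in> M'"
      then obtain s1 b1 t1 s2 b2 t2 where "x = s1 + t1 *\<^sub>R v" "aa = b1 + t1*c" "(s1,b1)\<in>M"
        "y = s2 + t2 *\<^sub>R v" "b = b2 + t2*c" "(s2,b2)\<in>M" unfolding M'_def by auto
      then show "(x+y, aa+b) \<in> M'" unfolding M'_def
        by (intro CollectI exI[of _ "s1+s2"] exI[of _ "b1+b2"] exI[of _ "t1+t2"]) (auto simp: Madd algebra_simps)
    next
      fix x aa t assume "(x,aa) \<in> M'"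
      then obtain s1 b1 t1 where h: "x = s1 + t1 *\<^sub>R v" "aa = b1 + t1*c" "(s1,b1)\<in>M" unfolding M'_def by auto
      then have "(t *\<^sub>R x, t*aa) = (t *\<^sub>R s1 + (t*t1) *\<^sub>R v, t*b1 + (t*t1)*c)"
        by (auto simp: algebra_simps)
      moreover have "(t *\<^sub>R s1, t*b1) \<in> M" using Msc h(3) by blast
      ultimately show "(t *\<^sub>R x, t*aa) \<in> M'" unfolding M'_def by blast
    next
      fix x aa b assume "(x,aa) \<in> M'" "(x,b) \<in> M'"
      then obtain s1 b1 t1 s2 b2 t2 where h: "(x,aa) = (s1 + t1 *\<^sub>R v, b1 + t1*c)" "(s1,b1)\<in>M"
        "(x,b) = (s2 + t2 *\<^sub>R v, b2 + t2*c)" "(s2,b2)\<in>M" unfolding M'_def by blast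
      then have "t1 = t2" using key[of s1 b1 s2 b2 t1 t2] by auto
      then have "s1 = s2" using h by auto
      then have "b1 = b2" using h Mfun by blast
      then show "aa = b" using h \<open>t1 = t2\<close> by auto
    next
      fix x aa assume "(x,aa) \<in> M'"
      then obtain s b t where x: "x = s + t *\<^sub>R v" "aa = b + t*c" "(s,b)\<in>M" unfolding M'_def by auto
      show "aa \<le> p x"
      proof (cases t "0::real" rule: linorder_cases)
        case equal then show ?thesis using x Mdom by auto
      next
        case greater
        have "((1/t) *\<^sub>R s, (1/t) * b) \<in> M" using Msc x(3) .
        then have "c \<le> p ((1/t) *\<^sub>R s + v) - (1/t) * b" using c2 by blast
        then have "t * c \<le> t * (p ((1/t) *\<^sub>R s + v) - (1/t) * b)"
          using greater by (intro mult_left_mono) auto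
        then have "t * c \<le> t * p ((1/t) *\<^sub>R s + v) - b" using greater by (simp add: right_diff_distrib)
        also have "t * p ((1/t) *\<^sub>R s + v) = p (t *\<^sub>R ((1/t) *\<^sub>R s + v))" using hom greater by simp
        also have "t *\<^sub>R ((1/t) *\<^sub>R s + v) = s + t *\<^sub>R v" using greater by (simp add: algebra_simps)
        finally show ?thesis using x by simp
      next
        case less
        define u where "u = -t"
        have u: "u > 0" using less u_def by simp
        have "((1/u) *\<^sub>R s, (1/u) * b) \<in> M" using Msc x(3) .
        then have "(1/u) * b - p ((1/u) *\<^sub>R s - v) \<le> c" using c1 by blast
        then have "u * ((1/u) * b - p ((1/u) *\<^sub>R s - v)) \<le> u * c" using u by (simp add: mult_left_mono)
        then have "b - u * p ((1/u) *\<^sub>R s - v) \<le> u * c" using u by (simp add: right_diff_distrib)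
        also have "u * p ((1/u) *\<^sub>R s - v) = p (u *\<^sub>R ((1/u) *\<^sub>R s - v))" using hom u by simp
        also have "u *\<^sub>R ((1/u) *\<^sub>R s - v) = s + t *\<^sub>R v" using u by (simp add: algebra_simps u_def)
        finally show ?thesis using x u_def by simp
      qed
    qed
    moreover have "M \<subseteq> M'" unfolding M'_def by (force intro: exI[of _ 0])
    ultimately have "M' \<in> A" "M \<subseteq> M'" using G0M unfolding A_def by auto
    then have "M' = M" using Mmax by blast
    moreover have "(v, c) = (0 + 1 *\<^sub>R v, 0 + 1 * c)" by simp
    then have "(v, c) \<in> M'" unfolding M'_def using M00 by blast
    ultimately show False using nv by auto
  qed
  define L where "L x = (THE b. (x,b) \<in> M)" for x
  have LM: "(x, L x) \<in> M" for x unfolding L_def using total Mfun by (metis theI)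
  have Lu: "(x,b) \<in> M \<Longrightarrow> L x = b" for x b using LM Mfun by blast
  have "linear L"
  proof (rule linearI)
    fix x y show "L (x + y) = L x + L y" using Lu[OF Madd[OF LM LM]] .
  next
    fix t x show "L (t *\<^sub>R x) = t *\<^sub>R L x" using Lu[OF Msc[OF LM]] by simp
  qed
  moreover have "L x \<le> p x" for x using Mdom LM by blast
  moreover have "(v0, a) = (1 *\<^sub>R v0, 1 * a)" by simp
  then have "(v0, a) \<in> M" using G0M unfolding G0_def by blast
  then have "L v0 = a" using Lu by blast
  ultimately show ?thesis by blast
qed


lemma sep_lemma:
  fixes q :: "'v::real_vector \<Rightarrow> real"
  assumes qadd: "\<And>x y. q (x + y) \<le> q x + q y" and qsc: "\<And>t x. q (t *\<^sub>R x) = \<bar>t\<bar> * q x"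
    and C: "convex C" "c0 \<in> C" and U: "convex U" "u0 \<in> U" and \<delta>: "\<delta> > 0"
    and ball: "\<And>v. q v < \<delta> \<Longrightarrow> u0 + v \<in> U" and disj: "C \<inter> U = {}"
  shows "\<exists>L \<tau>. linear L \<and> (\<forall>v. \<bar>L v\<bar> \<le> q v / \<delta>) \<and> \<tau> > 0 \<and> (\<forall>c\<in>C. \<forall>u\<in>U. L c \<le> L u)
             \<and> (\<forall>c\<in>C. L c + \<tau> \<le> L u0)"
proof -
  have qnn: "q x \<ge> 0" for x
  proof -
    have "q 0 \<le> q x + q (-x)" using qadd[of x "-x"] by simp
    moreover have "q 0 = 0" using qsc[of 0 0] by simp
    moreover have "q (-x) = q x" using qsc[of "-1" x] by simp
    ultimately show ?thesis by simp
  qed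
  have qneg: "q (-x) = q x" for x using qsc[of "-1" x] by simp
  define d where "d = u0 - c0"
  define H where "H = {c - u + d | c u. c \<in> C \<and> u \<in> U}"
  have Hc: "convex H" unfolding convex_def
  proof (intro ballI allI impI)
    fix x y and a b :: real assume xy: "x \<in> H" "y \<in> H" and ab: "0 \<le> a" "0 \<le> b" "a + b = 1"
    obtain c1 u1 c2 u2 where h: "x = c1 - u1 + d" "c1 \<in> C" "u1 \<in> U" "y = c2 - u2 + d" "c2 \<in> C" "u2 \<in> U"
      using xy unfolding H_def by blast
    have "a *\<^sub>R x + b *\<^sub>R y = (a *\<^sub>R c1 + b *\<^sub>R c2) - (a *\<^sub>R u1 + b *\<^sub>R u2) + (a + b) *\<^sub>R d"
      unfolding h(1) h(4) by (simp add: algebra_simps)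
    moreover have "a *\<^sub>R c1 + b *\<^sub>R c2 \<in> C" using C(1) h ab unfolding convex_def by blast
    moreover have "a *\<^sub>R u1 + b *\<^sub>R u2 \<in> U" using U(1) h ab unfolding convex_def by blast
    ultimately show "a *\<^sub>R x + b *\<^sub>R y \<in> H" unfolding H_def using ab by auto
  qed
  have Hball: "v \<in> H" if "q v < \<delta>" for v
  proof -
    have "u0 + (-v) \<in> U" using ball[of "-v"] that qneg by simp
    moreover have "v = c0 - (u0 + (-v)) + d" unfolding d_def by simp
    ultimately show ?thesis unfolding H_def using C(2) by blast
  qed
  have H0: "0 \<in> H" using Hball[of 0] qsc[of 0 0] \<delta> by simp
  have d_notin: "d \<notin> H"
  proof
    assume "d \<in> H"
    then obtain c u where "d = c - u + d" "c \<in> C" "u \<in> U" unfolding H_def by blast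
    then show False using disj by auto
  qed
  define S where "S v = {t. 0 < t \<and> (1/t) *\<^sub>R v \<in> H}" for v
  define \<mu> where "\<mu> v = Inf (S v)" for v
  have Sup: "t' \<in> S v" if "t \<in> S v" "t \<le> t'" for t t' v
  proof -
    have t: "t > 0" "(1/t) *\<^sub>R v \<in> H" using that unfolding S_def by auto
    have "(1/t') *\<^sub>R v = (t/t') *\<^sub>R ((1/t) *\<^sub>R v) + (1 - t/t') *\<^sub>R 0" using t that by simp
    moreover have "(t/t') *\<^sub>R ((1/t) *\<^sub>R v) + (1 - t/t') *\<^sub>R 0 \<in> H"
      using Hc t H0 that unfolding convex_def by (intro Hc[unfolded convex_def, rule_format]) auto
    ultimately show ?thesis using t that unfolding S_def by auto
  qed
  have Sq: "t \<in> S v" if "t > q v / \<delta>" for t v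
  proof -
    have tpos: "t > 0" using that qnn[of v] \<delta> by (smt (verit) divide_nonneg_pos)
    have "q ((1/t) *\<^sub>R v) = q v / t" using qsc tpos by simp
    also have "\<dots> < \<delta>" using that tpos \<delta> by (simp add: divide_less_eq mult.commute pos_divide_less_eq)
    finally show ?thesis using Hball tpos unfolding S_def by auto
  qed
  have Sne: "S v \<noteq> {}" for v using Sq[where t="q v / \<delta> + 1" and v=v] by auto
  have Sbdd: "bdd_below (S v)" for v unfolding S_def bdd_below_def by (auto intro: less_imp_le)
  have mu_le: "\<mu> v \<le> t" if "t \<in> S v" for t v unfolding \<mu>_def using that Sbdd by (rule cInf_lower)
  have mu_ex: "\<exists>t\<in>S v. t < \<mu> v + e" if "e > 0" for v e
  proof (rule ccontr)
    assume "\<not> ?thesis"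
    then have "\<mu> v + e \<le> \<mu> v" unfolding \<mu>_def using Sne by (intro cInf_greatest) (auto simp: not_less \<mu>_def)
    then show False using that by simp
  qed
  have mu_nn: "\<mu> v \<ge> 0" for v unfolding \<mu>_def using Sne by (intro cInf_greatest) (auto simp: S_def)
  have mu_q: "\<mu> v \<le> q v / \<delta>" for v
  proof (rule field_le_epsilon)
    fix e :: real assume "e > 0"
    then show "\<mu> v \<le> q v / \<delta> + e" using mu_le Sq by simp
  qed
  have mu_add: "\<mu> (x + y) \<le> \<mu> x + \<mu> y" for x y
  proof (rule field_le_epsilon)
    fix e :: real assume e: "e > 0"
    obtain s where s: "s \<in> S x" "s < \<mu> x + e/2" using mu_ex[where e="e/2" and v=x] e by auto
    obtain t where t: "t \<in> S y" "t < \<mu> y + e/2" using mu_ex[where e="e/2" and v=y] e by auto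
    have sp: "s > 0" "(1/s) *\<^sub>R x \<in> H" "t > 0" "(1/t) *\<^sub>R y \<in> H" using s t unfolding S_def by auto
    have "(1/(s+t)) *\<^sub>R (x + y) = (s/(s+t)) *\<^sub>R ((1/s) *\<^sub>R x) + (t/(s+t)) *\<^sub>R ((1/t) *\<^sub>R y)"
      using sp by (simp add: algebra_simps)
    moreover have "\<dots> \<in> H" using Hc sp unfolding convex_def
      by (intro Hc[unfolded convex_def, rule_format]) (auto simp: add_divide_distrib[symmetric])
    ultimately have "s + t \<in> S (x + y)" using sp unfolding S_def by auto
    then have "\<mu> (x + y) \<le> s + t" by (rule mu_le)
    then show "\<mu> (x + y) \<le> \<mu> x + \<mu> y + e" using s t by simp
  qed
  have mu_sc_le: "\<mu> (t *\<^sub>R x) \<le> t * \<mu> x" if tp0: "t > 0" for t x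
  proof (rule field_le_epsilon)
    fix e :: real assume e: "e > 0"
    obtain s where s: "s \<in> S x" "s < \<mu> x + e/t" using mu_ex[where e="e/t" and v=x] e tp0 by auto
    have "(1 / (t * s)) *\<^sub>R (t *\<^sub>R x) = (1/s) *\<^sub>R x" using tp0 by simp
    then have "t * s \<in> S (t *\<^sub>R x)" using s tp0 unfolding S_def by auto
    then have "\<mu> (t *\<^sub>R x) \<le> t * s" by (rule mu_le)
    also have "\<dots> \<le> t * (\<mu> x + e/t)" using s tp0 by simp
    also have "\<dots> = t * \<mu> x + e" using tp0 by (simp add: algebra_simps)
    finally show "\<mu> (t *\<^sub>R x) \<le> t * \<mu> x + e" .
  qed
  have mu0: "\<mu> 0 = 0" using mu_q[of 0] mu_nn[of 0] qsc[of 0 0] by simp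
  have mu_sc: "\<mu> (t *\<^sub>R x) = t * \<mu> x" if "t \<ge> 0" for t x
  proof (cases "t = 0")
    case True then show ?thesis using mu0 by simp
  next
    case False
    then have tp: "t > 0" using that by simp
    have "\<mu> x = \<mu> ((1/t) *\<^sub>R (t *\<^sub>R x))" using tp by simp
    also have "\<dots> \<le> (1/t) * \<mu> (t *\<^sub>R x)" using mu_sc_le[where t="1/t" and x="t *\<^sub>R x"] tp by simp
    finally have "t * \<mu> x \<le> \<mu> (t *\<^sub>R x)" using tp by (simp add: field_simps)
    then show ?thesis using mu_sc_le[OF tp, of x] by linarith
  qed
  have mu_H: "\<mu> v \<le> 1" if "v \<in> H" for v using mu_le[where t=1 and v=v] that unfolding S_def by simp
  have mu_d: "1 \<le> \<mu> d" unfolding \<mu>_def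
  proof (rule cInf_greatest[OF Sne])
    fix t assume t: "t \<in> S d"
    show "1 \<le> t"
    proof (rule ccontr)
      assume "\<not> 1 \<le> t"
      then have t1: "t < 1" "t > 0" "(1/t) *\<^sub>R d \<in> H" using t unfolding S_def by auto
      have "t *\<^sub>R ((1/t) *\<^sub>R d) + (1 - t) *\<^sub>R 0 \<in> H"
        using t1 H0 by (intro Hc[unfolded convex_def, rule_format]) auto
      then show False using t1 d_notin by simp
    qed
  qed
  have "\<exists>L. linear L \<and> (\<forall>x. L x \<le> \<mu> x) \<and> L d = 1"
  proof (rule HB_ext)
    show "\<And>x y. \<mu> (x + y) \<le> \<mu> x + \<mu> y" by (rule mu_add)
    show "\<And>t x. 0 \<le> t \<Longrightarrow> \<mu> (t *\<^sub>R x) = t * \<mu> x" by (rule mu_sc)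
    show "1 \<le> \<mu> d" by (rule mu_d)
    show "- 1 \<le> \<mu> (- d)" using mu_nn[of "-d"] by simp
  qed
  then obtain L where L: "linear L" "\<And>x. L x \<le> \<mu> x" "L d = 1" by blast
  have Lbd: "\<bar>L v\<bar> \<le> q v / \<delta>" for v
  proof -
    have "L v \<le> q v / \<delta>" using L(2) mu_q order_trans by blast
    moreover have "- L v \<le> q v / \<delta>" using L(2)[of "-v"] mu_q[of "-v"] qneg linear_neg[OF L(1)] by simp
    ultimately show ?thesis by simp
  qed
  have sepCU: "L c \<le> L u" if "c \<in> C" "u \<in> U" for c u
  proof -
    have "c - u + d \<in> H" using that unfolding H_def by blast
    then have "L (c - u + d) \<le> 1" using L(2) mu_H order_trans by blast
    then show ?thesis using L(1) L(3) by (simp add: linear_add linear_diff)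
  qed
  define \<tau> where "\<tau> = \<delta> / (2 * (q d + 1))"
  have \<tau>: "\<tau> > 0" unfolding \<tau>_def using \<delta> qnn[of d] by (simp add: add_nonneg_pos)
  have "q (- (\<tau> *\<^sub>R d)) = \<tau> * q d" using qsc[of "-\<tau>" d] \<tau> by simp
  also have "\<dots> < \<delta>"
  proof -
    have "\<tau> * q d \<le> \<tau> * (q d + 1)" using \<tau> by simp
    also have "\<dots> = \<delta>/2" unfolding \<tau>_def using qnn[of d] by (simp add: field_simps)
    finally show ?thesis using \<delta> by simp
  qed
  finally have "u0 + (- (\<tau> *\<^sub>R d)) \<in> U" by (rule ball)
  then have uin: "u0 - \<tau> *\<^sub>R d \<in> U" by simp
  have Lu: "L (u0 - \<tau> *\<^sub>R d) = L u0 - \<tau>" using L(1) L(3) by (simp add: linear_diff linear_scale)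
  have "L c \<le> L u0 - \<tau>" if "c \<in> C" for c
    using sepCU[OF that uin] Lu by simp
  then have "L c + \<tau> \<le> L u0" if "c \<in> C" for c using that by fastforce
  then show ?thesis using Lbd \<tau> sepCU L(1) by (intro exI[of _ L] exI[of _ \<tau>]) auto
qed


declare blinfun.add_left[simp] blinfun.diff_left[simp] blinfun.scaleR_left[simp]
  blinfun.minus_left[simp] blinfun.zero_left[simp]

lemma factor_lemma:
  fixes F :: "'a::real_normed_vector set"
  assumes "finite F"
  shows "linear (L :: ('a \<Rightarrow>\<^sub>L real) \<Rightarrow> real) \<Longrightarrow> (\<And>y. (\<forall>x\<in>F. blinfun_apply y x = 0) \<Longrightarrow> L y = 0)
         \<Longrightarrow> \<exists>z. \<forall>y. L y = blinfun_apply y z"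
  using assms
proof (induction F arbitrary: L rule: finite_induct)
  case empty
  then show ?case by (intro exI[of _ 0]) auto
next
  case (insert x0 F L)
  show ?case
  proof (cases "\<forall>y::'a \<Rightarrow>\<^sub>L real. (\<forall>x\<in>F. blinfun_apply y x = 0) \<longrightarrow> blinfun_apply y x0 = 0")
    case True
    have "L y = 0" if yF: "\<forall>x\<in>F. blinfun_apply y x = 0" for y
    proof -
      have "blinfun_apply y x0 = 0" using True yF by blast
      then have "\<forall>x\<in>insert x0 F. blinfun_apply y x = 0" using yF by simp
      then show ?thesis by (rule insert.prems(2))
    qed
    then show ?thesis using insert.IH[OF insert.prems(1)] by blast
  next
    case False
    then obtain y0 :: "'a \<Rightarrow>\<^sub>L real" where y0: "\<forall>x\<in>F. blinfun_apply y0 x = 0" "blinfun_apply y0 x0 \<noteq> 0" by blast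
    define y1 where "y1 = (1 / blinfun_apply y0 x0) *\<^sub>R y0"
    have y1: "\<forall>x\<in>F. blinfun_apply y1 x = 0" "blinfun_apply y1 x0 = 1"
      using y0 unfolding y1_def by (auto simp: blinfun.scaleR_left)
    define L' where "L' y = L y - L y1 * blinfun_apply y x0" for y
    have linL': "linear L'" unfolding L'_def
      using insert.prems(1) by (intro linearI) (auto simp: linear_add linear_scale algebra_simps)
    have "L' y = 0" if "\<forall>x\<in>F. blinfun_apply y x = 0" for y
    proof -
      define y' where "y' = y - blinfun_apply y x0 *\<^sub>R y1"
      have "\<forall>x\<in>insert x0 F. blinfun_apply y' x = 0" unfolding y'_def using that y1 by auto
      then have "L y' = 0" using insert.prems(2) by blast
      then show ?thesis unfolding L'_def y'_def using insert.prems(1)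
        by (simp add: linear_diff linear_scale)
    qed
    then obtain z' where z': "\<forall>y. L' y = blinfun_apply y z'" using insert.IH[OF linL'] by blast
    show ?thesis
    proof (intro exI allI)
      fix y
      show "L y = blinfun_apply y (z' + L y1 *\<^sub>R x0)"
        using z'[rule_format, of y] unfolding L'_def by (simp add: blinfun.bilinear_simps)
    qed
  qed
qed

lemma topspace_wstar: "topspace weak_star_topology = UNIV"
  unfolding weak_star_topology_def by (simp add: topspace_pullback_topology)

lemma wstar_nbhd:
  assumes "closedin weak_star_topology S" "y1 \<notin> S"
  shows "\<exists>F \<delta>. finite F \<and> \<delta> > 0 \<and> (\<forall>y. (\<forall>x\<in>F. \<bar>blinfun_apply y x - blinfun_apply y1 x\<bar> < \<delta>) \<longrightarrow> y \<notin> S)"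
proof -
  have "openin weak_star_topology (UNIV - S)" using assms(1) unfolding closedin_def topspace_wstar by simp
  then obtain U where U: "openin (product_topology (\<lambda>_. euclideanreal) UNIV) U"
    "UNIV - S = blinfun_apply -` U \<inter> UNIV"
    unfolding weak_star_topology_def openin_pullback_topology by blast
  have "blinfun_apply y1 \<in> U" using U(2) assms(2) by blast
  from product_topology_open_contains_basis[OF U(1) this] obtain X where
    X: "blinfun_apply y1 \<in> (\<Pi>\<^sub>E i\<in>UNIV. X i)" "\<And>i. open (X i)" "finite {i. X i \<noteq> UNIV}"
       "(\<Pi>\<^sub>E i\<in>UNIV. X i) \<subseteq> U" by auto
  define F where "F = {i. X i \<noteq> UNIV}"
  have "\<forall>i\<in>F. \<exists>d>0. ball (blinfun_apply y1 i) d \<subseteq> X i"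
    using X(1,2) open_contains_ball by blast
  then obtain d where d: "\<And>i. i \<in> F \<Longrightarrow> d i > 0 \<and> ball (blinfun_apply y1 i) (d i) \<subseteq> X i" by metis
  define \<delta> where "\<delta> = Min (insert 1 (d ` F))"
  have fin: "finite F" using X(3) F_def by simp
  have \<delta>: "\<delta> > 0" unfolding \<delta>_def using fin d by auto
  have \<delta>le: "\<delta> \<le> d i" if "i \<in> F" for i unfolding \<delta>_def using fin that by auto
  have "y \<notin> S" if "\<forall>x\<in>F. \<bar>blinfun_apply y x - blinfun_apply y1 x\<bar> < \<delta>" for y
  proof -
    have "blinfun_apply y i \<in> X i" for i
    proof (cases "i \<in> F")
      case True
      then have "dist (blinfun_apply y1 i) (blinfun_apply y i) < d i"
        using that[rule_format, OF True] \<delta>le[OF True] by (simp add: dist_real_def abs_minus_commute)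
      then show ?thesis using d[OF True] by auto
    next
      case False then show ?thesis unfolding F_def by auto
    qed
    then have "blinfun_apply y \<in> U" using X(4) by auto
    then show ?thesis using U(2) by blast
  qed
  then show ?thesis using fin \<delta> by blast
qed


declare blinfun.add_right[simp] blinfun.diff_right[simp] blinfun.scaleR_right[simp]
  blinfun.minus_right[simp] blinfun.zero_right[simp]

definition fle :: "(('a::real_normed_vector \<Rightarrow>\<^sub>L real) \<Rightarrow> ereal) \<Rightarrow> 'a \<Rightarrow> real \<Rightarrow> bool" where
  "fle g x K \<longleftrightarrow> (\<forall>y r. g y \<le> ereal r \<longrightarrow> blinfun_apply y x - r \<le> K)"

lemma proper_dom:
  assumes "proper_fun g"
  obtains y0 r0 where "g y0 = ereal r0"
proof -
  obtain y0 where "g y0 < \<infinity>" "g y0 \<noteq> -\<infinity>" using assms unfolding proper_fun_def by blast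
  then show ?thesis using that by (cases "g y0") auto
qed

lemma convex_epi:
  assumes "convex_ereal g"
  shows "convex {v. g (fst v) \<le> ereal (snd v)}"
  unfolding convex_def
proof (intro ballI allI impI)
  fix v w and a b :: real
  assume v: "v \<in> {v. g (fst v) \<le> ereal (snd v)}" and w: "w \<in> {v. g (fst v) \<le> ereal (snd v)}"
    and ab: "0 \<le> a" "0 \<le> b" "a + b = 1"
  have gv: "g (fst v) \<le> ereal (snd v)" and gw: "g (fst w) \<le> ereal (snd w)" using v w by auto
  show "a *\<^sub>R v + b *\<^sub>R w \<in> {v. g (fst v) \<le> ereal (snd v)}"
  proof (cases "a = 0 \<or> b = 0")
    case True
    show ?thesis
    proof (cases "a = 0")
      case True
      then have "b = 1" using ab by simp
      then have "a *\<^sub>R v + b *\<^sub>R w = w" using True by simp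
      then show ?thesis using w by simp
    next
      case False
      then have "b = 0" "a = 1" using ab True by simp_all
      then have "a *\<^sub>R v + b *\<^sub>R w = v" by simp
      then show ?thesis using v by simp
    qed
  next
    case False
    then have a: "0 < a" "a < 1" and b: "b = 1 - a" using ab by auto
    have "g (a *\<^sub>R fst v + (1 - a) *\<^sub>R fst w) \<le> ereal a * g (fst v) + ereal (1 - a) * g (fst w)"
      using assms a unfolding convex_ereal_def by blast
    also have "\<dots> \<le> ereal a * ereal (snd v) + ereal (1 - a) * ereal (snd w)"
      using a gv gw by (intro add_mono ereal_mult_left_mono) auto
    also have "\<dots> = ereal (a * snd v + (1 - a) * snd w)" by simp
    finally have *: "g (a *\<^sub>R fst v + (1 - a) *\<^sub>R fst w) \<le> ereal (a * snd v + (1 - a) * snd w)" .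
    have e1: "a *\<^sub>R fst v + (1-a) *\<^sub>R fst w = fst (a *\<^sub>R v + b *\<^sub>R w)" using b by simp
    have e2: "a * snd v + (1-a) * snd w = snd (a *\<^sub>R v + b *\<^sub>R w)" using b by simp
    show ?thesis using * unfolding e1 e2 mem_Collect_eq .
  qed
qed

lemma A0:
  fixes g :: "('a::real_normed_vector \<Rightarrow>\<^sub>L real) \<Rightarrow> ereal"
  assumes P: "proper_fun g" and cvx: "convex_ereal g" and lsc: "weak_star_lsc g" and c0: "ereal c0 < g y1"
  shows "\<exists>x s \<tau>. \<tau> > 0 \<and> s \<le> 0 \<and> (\<forall>y r. g y \<le> ereal r \<longrightarrow>
            blinfun_apply y x + s * r + \<tau> \<le> blinfun_apply y1 x + s * c0)"
proof -
  from ereal_dense2[OF c0] obtain c where c: "ereal c0 < ereal c" "ereal c < g y1" by (elim exE conjE)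
  then have cc: "c0 < c" by simp
  have clo: "closedin weak_star_topology {y. g y \<le> ereal c}" using lsc unfolding weak_star_lsc_def by blast
  have nin: "y1 \<notin> {y. g y \<le> ereal c}" using c(2) by (simp add: not_le)
  from wstar_nbhd[OF clo nin] obtain F \<delta>0 where F0: "finite F" "\<delta>0 > 0"
    "\<forall>y. (\<forall>x\<in>F. \<bar>blinfun_apply y x - blinfun_apply y1 x\<bar> < \<delta>0) \<longrightarrow> y \<notin> {y. g y \<le> ereal c}"
    by (elim exE conjE)
  have F: "finite F" "\<delta>0 > 0"
    "\<And>y. (\<forall>x\<in>F. \<bar>blinfun_apply y x - blinfun_apply y1 x\<bar> < \<delta>0) \<Longrightarrow> \<not> g y \<le> ereal c"
    using F0 by auto
  obtain y0 r0 where y0: "g y0 = ereal r0" by (rule proper_dom[OF P])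
  define q :: "('a \<Rightarrow>\<^sub>L real) \<times> real \<Rightarrow> real" where
    "q v = (\<Sum>x\<in>F. \<bar>blinfun_apply (fst v) x\<bar>) + \<bar>snd v\<bar>" for v
  define C :: "(('a \<Rightarrow>\<^sub>L real) \<times> real) set" where "C = {v. g (fst v) \<le> ereal (snd v)}"
  define U :: "(('a \<Rightarrow>\<^sub>L real) \<times> real) set" where
    "U = {v. (\<forall>x\<in>F. \<bar>blinfun_apply (fst v) x - blinfun_apply y1 x\<bar> < \<delta>0) \<and> snd v < c}"
  define \<delta> where "\<delta> = min \<delta>0 (c - c0)"
  have qadd: "q (v + w) \<le> q v + q w" for v w
  proof -
    have "(\<Sum>x\<in>F. \<bar>blinfun_apply (fst (v + w)) x\<bar>) \<le> (\<Sum>x\<in>F. \<bar>blinfun_apply (fst v) x\<bar> + \<bar>blinfun_apply (fst w) x\<bar>)"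
      by (intro sum_mono) (simp add: abs_triangle_ineq)
    moreover have "\<bar>snd (v + w)\<bar> \<le> \<bar>snd v\<bar> + \<bar>snd w\<bar>" by (simp add: abs_triangle_ineq)
    ultimately show ?thesis unfolding q_def by (simp add: sum.distrib)
  qed
  have qsc: "q (t *\<^sub>R v) = \<bar>t\<bar> * q v" for t v
    unfolding q_def by (simp add: abs_mult sum_distrib_left algebra_simps)
  have Cc: "convex C" unfolding C_def by (rule convex_epi[OF cvx])
  have c0C: "(y0, r0) \<in> C" unfolding C_def using y0 by simp
  have Uc: "convex U"
  proof -
    have eq: "U = (\<Inter>x\<in>F. {v. \<bar>blinfun_apply (fst v) x - blinfun_apply y1 x\<bar> < \<delta>0}) \<inter> (snd -` {..<c})"
      unfolding U_def by auto
    have "convex {v::('a \<Rightarrow>\<^sub>L real) \<times> real. \<bar>blinfun_apply (fst v) x - blinfun_apply y1 x\<bar> < \<delta>0}" for x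
    proof -
      have lin: "linear (\<lambda>v::('a \<Rightarrow>\<^sub>L real) \<times> real. blinfun_apply (fst v) x)" by (intro linearI) auto
      have "{v::('a \<Rightarrow>\<^sub>L real) \<times> real. \<bar>blinfun_apply (fst v) x - blinfun_apply y1 x\<bar> < \<delta>0}
          = (\<lambda>v. blinfun_apply (fst v) x) -` ball (blinfun_apply y1 x) \<delta>0"
        by (auto simp: dist_real_def abs_minus_commute)
      then show ?thesis using convex_linear_vimage[OF lin convex_ball] by simp
    qed
    moreover have "convex (snd -` {..<c} :: (('a \<Rightarrow>\<^sub>L real) \<times> real) set)"
      by (rule convex_linear_vimage) (auto intro: bounded_linear.linear[OF bounded_linear_snd])
    ultimately show ?thesis unfolding eq by (intro convex_Int convex_INT) auto
  qed
  have u0U: "(y1, c0) \<in> U" unfolding U_def using F(2) cc by auto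
  have \<delta>: "\<delta> > 0" unfolding \<delta>_def using F(2) cc by simp
  have ball: "(y1, c0) + v \<in> U" if "q v < \<delta>" for v
  proof -
    have "\<bar>blinfun_apply (fst v) x\<bar> < \<delta>0" if "x \<in> F" for x
    proof -
      have "\<bar>blinfun_apply (fst v) x\<bar> \<le> (\<Sum>x\<in>F. \<bar>blinfun_apply (fst v) x\<bar>)"
        using F(1) that by (intro member_le_sum) auto
      also have "\<dots> \<le> q v" unfolding q_def by simp
      finally show ?thesis using \<open>q v < \<delta>\<close> unfolding \<delta>_def by simp
    qed
    moreover have "\<bar>snd v\<bar> < c - c0"
    proof -
      have "(\<Sum>x\<in>F. \<bar>blinfun_apply (fst v) x\<bar>) \<ge> 0" by (intro sum_nonneg) auto
      then have "\<bar>snd v\<bar> \<le> q v" unfolding q_def by simp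
      then show ?thesis using \<open>q v < \<delta>\<close> unfolding \<delta>_def by simp
    qed
    ultimately show ?thesis unfolding U_def by auto
  qed
  have disj: "C \<inter> U = {}"
  proof -
    have False if "v \<in> C" "v \<in> U" for v
    proof -
      have "\<not> g (fst v) \<le> ereal c" using F(3) that(2) unfolding U_def by auto
      moreover have "g (fst v) \<le> ereal (snd v)" "snd v < c" using that unfolding C_def U_def by auto
      ultimately show False by (meson ereal_less_eq(3) less_imp_le order_trans)
    qed
    then show ?thesis by blast
  qed
  obtain L \<tau> where L: "linear L" "\<And>v. \<bar>L v\<bar> \<le> q v / \<delta>" "\<tau> > 0" "\<And>c. c \<in> C \<Longrightarrow> L c + \<tau> \<le> L (y1, c0)"
    using sep_lemma[OF qadd qsc Cc c0C Uc u0U \<delta> ball disj] by blast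
  define s where "s = L (0, 1)"
  have Lsplit: "L v = L (fst v, 0) + snd v * s" for v
  proof -
    have "v = (fst v, 0) + snd v *\<^sub>R (0, 1)" by simp
    then have "L v = L ((fst v, 0) + snd v *\<^sub>R (0, 1))" by metis
    also have "\<dots> = L (fst v, 0) + snd v * s" unfolding s_def linear_add[OF L(1)] linear_scale[OF L(1)] by simp
    finally show ?thesis .
  qed
  have linLy: "linear (\<lambda>y. L (y, 0))"
  proof (intro linearI)
    fix a b show "L (a + b, 0) = L (a, 0) + L (b, 0)"
      using linear_add[OF L(1), of "(a,0)" "(b,0)"] by simp
  next
    fix r a show "L (r *\<^sub>R a, 0) = r *\<^sub>R L (a, 0)"
      using linear_scale[OF L(1), of r "(a,0)"] by simp
  qed
  have "L (y, 0) = 0" if "\<forall>x\<in>F. blinfun_apply y x = 0" for y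
    using L(2)[of "(y, 0)"] that unfolding q_def by simp
  then obtain z where z: "\<And>y. L (y, 0) = blinfun_apply y z" using factor_lemma[OF F(1) linLy] by blast
  have main: "blinfun_apply y z + r * s + \<tau> \<le> blinfun_apply y1 z + c0 * s" if "g y \<le> ereal r" for y r
    using L(4)[of "(y, r)"] that Lsplit[of "(y, r)"] Lsplit[of "(y1, c0)"] z unfolding C_def by simp
  have s: "s \<le> 0"
  proof (rule ccontr)
    assume "\<not> s \<le> 0"
    then have sp: "s > 0" by simp
    define r where "r = max r0 ((blinfun_apply y1 z + c0 * s - blinfun_apply y0 z) / s + 1)"
    have "g y0 \<le> ereal r" using y0 unfolding r_def by simp
    from main[OF this] have "blinfun_apply y0 z + r * s + \<tau> \<le> blinfun_apply y1 z + c0 * s" .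
    moreover have "r * s \<ge> ((blinfun_apply y1 z + c0 * s - blinfun_apply y0 z) / s + 1) * s"
      using sp unfolding r_def by (intro mult_right_mono) auto
    moreover have "((blinfun_apply y1 z + c0 * s - blinfun_apply y0 z) / s + 1) * s
       = blinfun_apply y1 z + c0 * s - blinfun_apply y0 z + s" using sp by (simp add: field_simps)
    ultimately show False using sp L(3) by linarith
  qed
  show ?thesis using main s L(3) by (intro exI[of _ z] exI[of _ s] exI[of _ \<tau>]) (auto simp: mult.commute)
qed


lemma fle_from:
  assumes s: "s < 0" and H: "\<forall>y r. g y \<le> ereal r \<longrightarrow> blinfun_apply y x + s * r + \<tau> \<le> B"
  shows "fle g ((-1/s) *\<^sub>R x) ((B - \<tau>)/(-s))"
  unfolding fle_def
proof (intro allI impI)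
  fix y r assume "g y \<le> ereal r"
  then have "blinfun_apply y x + s * r \<le> B - \<tau>" using H by force
  then have "(blinfun_apply y x + s * r) / (-s) \<le> (B - \<tau>) / (-s)" using s by (intro divide_right_mono) auto
  moreover have "(blinfun_apply y x + s * r) / (-s) = blinfun_apply y ((-1/s) *\<^sub>R x) - r"
    using s by (simp add: field_simps)
  ultimately show "blinfun_apply y ((-1/s) *\<^sub>R x) - r \<le> (B - \<tau>) / (-s)" by simp
qed

lemma A_lemma:
  fixes g :: "('a::real_normed_vector \<Rightarrow>\<^sub>L real) \<Rightarrow> ereal"
  assumes P: "proper_fun g" and cvx: "convex_ereal g" and lsc: "weak_star_lsc g" and c: "ereal c < g y1"
  shows "\<exists>x K. fle g x K \<and> c < blinfun_apply y1 x - K"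
proof -
  obtain y0 r0 where y0: "g y0 = ereal r0" by (rule proper_dom[OF P])
  have "ereal (r0 - 1) < g y0" by (simp add: y0)
  from A0[OF P cvx lsc this] obtain x s \<tau> where xs: "\<tau> > 0" "s \<le> 0"
    "\<forall>y r. g y \<le> ereal r \<longrightarrow> blinfun_apply y x + s * r + \<tau> \<le> blinfun_apply y0 x + s * (r0 - 1)"
    by (elim exE conjE)
  have "blinfun_apply y0 x + s * r0 + \<tau> \<le> blinfun_apply y0 x + s * (r0 - 1)" using xs(3) y0 by simp
  then have "s < 0" using xs(1) by (simp add: algebra_simps)
  from fle_from[OF this xs(3)] obtain x0 K0 where fle0: "fle g x0 K0" by blast
  from A0[OF P cvx lsc c] obtain x s \<tau> where H: "\<tau> > 0" "s \<le> 0"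
    "\<forall>y r. g y \<le> ereal r \<longrightarrow> blinfun_apply y x + s * r + \<tau> \<le> blinfun_apply y1 x + s * c"
    by (elim exE conjE)
  show ?thesis
  proof (cases "s = 0")
    case False
    then have s: "s < 0" using H(2) by simp
    have "c < blinfun_apply y1 ((-1/s) *\<^sub>R x) - (blinfun_apply y1 x + s * c - \<tau>) / (-s)"
    proof -
      have "blinfun_apply y1 ((-1/s) *\<^sub>R x) - (blinfun_apply y1 x + s * c - \<tau>) / (-s) = c + \<tau> / (-s)"
        using s by (simp add: field_simps)
      moreover have "\<tau> / (-s) > 0" using s H(1) by (simp add: divide_pos_neg)
      ultimately show ?thesis by simp
    qed
    then show ?thesis using fle_from[OF s H(3)] by blast
  next
    case True
    define t where "t = (\<bar>c - blinfun_apply y1 x0 + K0\<bar> + 1) / \<tau>"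
    have t: "t > 0" unfolding t_def using H(1) by simp
    have "fle g (x0 + t *\<^sub>R x) (K0 + t * (blinfun_apply y1 x - \<tau>))"
      unfolding fle_def
    proof (intro allI impI)
      fix y r assume yr: "g y \<le> ereal r"
      then have "blinfun_apply y x0 - r \<le> K0" using fle0 unfolding fle_def by blast
      moreover have "blinfun_apply y x \<le> blinfun_apply y1 x - \<tau>" using H(3) yr True by force
      then have "t * blinfun_apply y x \<le> t * (blinfun_apply y1 x - \<tau>)" using t by (intro mult_left_mono) auto
      ultimately show "blinfun_apply y (x0 + t *\<^sub>R x) - r \<le> K0 + t * (blinfun_apply y1 x - \<tau>)"
        by (simp add: algebra_simps)
    qed
    moreover have "c < blinfun_apply y1 (x0 + t *\<^sub>R x) - (K0 + t * (blinfun_apply y1 x - \<tau>))"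
    proof -
      have "blinfun_apply y1 (x0 + t *\<^sub>R x) - (K0 + t * (blinfun_apply y1 x - \<tau>))
          = blinfun_apply y1 x0 - K0 + t * \<tau>" by (simp add: algebra_simps)
      also have "t * \<tau> = \<bar>c - blinfun_apply y1 x0 + K0\<bar> + 1" unfolding t_def using H(1) by simp
      finally show ?thesis by linarith
    qed
    ultimately show ?thesis by blast
  qed
qed


lemma ekeland:
  fixes \<phi> :: "'a::complete_space \<Rightarrow> real"
  assumes K: "closed K" "x0 \<in> K" and bd: "\<And>x. x \<in> K \<Longrightarrow> m \<le> \<phi> x"
    and lsc: "\<And>c. closed {x\<in>K. \<phi> x \<le> c}" and \<alpha>: "\<alpha> > 0"
  shows "\<exists>z\<in>K. \<phi> z \<le> \<phi> x0 \<and> (\<forall>x\<in>K. \<phi> z \<le> \<phi> x + \<alpha> * dist x z)"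
proof -
  define S where "S x = {y\<in>K. \<phi> y + \<alpha> * dist x y \<le> \<phi> x}" for x
  have Seq: "S x = K \<inter> (\<Inter>t. cball x t \<union> {y\<in>K. \<phi> y \<le> \<phi> x - \<alpha> * t})" for x
  proof (intro equalityI subsetI)
    fix y assume y: "y \<in> S x"
    have "y \<in> cball x t \<union> {y\<in>K. \<phi> y \<le> \<phi> x - \<alpha> * t}" for t
    proof (cases "dist x y \<le> t")
      case True then show ?thesis by simp
    next
      case False
      then have "\<alpha> * t \<le> \<alpha> * dist x y" using \<alpha> by simp
      then show ?thesis using y unfolding S_def by auto
    qed
    then show "y \<in> K \<inter> (\<Inter>t. cball x t \<union> {y\<in>K. \<phi> y \<le> \<phi> x - \<alpha> * t})" using y unfolding S_def by auto
  next
    fix y assume y: "y \<in> K \<inter> (\<Inter>t. cball x t \<union> {y\<in>K. \<phi> y \<le> \<phi> x - \<alpha> * t})"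
    have "\<phi> y + \<alpha> * dist x y \<le> \<phi> x"
    proof (rule ccontr)
      assume neg: "\<not> \<phi> y + \<alpha> * dist x y \<le> \<phi> x"
      define e where "e = (\<phi> y - \<phi> x + \<alpha> * dist x y) / (2 * \<alpha>)"
      have e: "e > 0" unfolding e_def using neg \<alpha> by simp
      have "y \<in> cball x (dist x y - e) \<union> {y\<in>K. \<phi> y \<le> \<phi> x - \<alpha> * (dist x y - e)}" using y by blast
      then have "\<phi> y \<le> \<phi> x - \<alpha> * (dist x y - e)" using e by auto
      then have h1: "\<phi> y + \<alpha> * dist x y - \<phi> x \<le> \<alpha> * e" by (simp add: algebra_simps)
      have "\<alpha> * e = (\<phi> y - \<phi> x + \<alpha> * dist x y) / 2" unfolding e_def using \<alpha> by simp
      then have "\<phi> y + \<alpha> * dist x y - \<phi> x \<le> (\<phi> y + \<alpha> * dist x y - \<phi> x) / 2" using h1 by simp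
      moreover have "0 < \<phi> y + \<alpha> * dist x y - \<phi> x" using neg by simp
      moreover have "\<And>D::real. D \<le> D / 2 \<Longrightarrow> 0 < D \<Longrightarrow> False" by linarith
      ultimately show False by blast
    qed
    then show "y \<in> S x" using y unfolding S_def by auto
  qed
  have Sclosed: "closed (S x)" for x
  proof -
    have "closed (cball x t \<union> {y\<in>K. \<phi> y \<le> \<phi> x - \<alpha> * t})" for t
      by (intro closed_Un closed_cball lsc)
    then show ?thesis unfolding Seq by (intro closed_Int K(1) closed_INT) auto
  qed
  have Smem: "x \<in> S x" if "x \<in> K" for x using that unfolding S_def by simp
  have SK: "S x \<subseteq> K" for x unfolding S_def by auto
  have Strans: "S y \<subseteq> S x" if "y \<in> S x" for x y
  proof
    fix w assume w: "w \<in> S y"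
    have "dist x w \<le> dist x y + dist y w" by (rule dist_triangle)
    then have "\<alpha> * dist x w \<le> \<alpha> * dist x y + \<alpha> * dist y w" using \<alpha> by (simp add: distrib_left[symmetric])
    then show "w \<in> S x" using w that unfolding S_def by auto
  qed
  have bdd: "bdd_below (\<phi> ` S x)" for x using bd SK unfolding bdd_below_def by blast
  define nxt where "nxt x n = (SOME y. y \<in> S x \<and> \<phi> y \<le> Inf (\<phi> ` S x) + (1/2)^n)" for x n
  have nxt: "nxt x n \<in> S x \<and> \<phi> (nxt x n) \<le> Inf (\<phi> ` S x) + (1/2)^n" if xK: "x \<in> K" for x n
  proof -
    have "Inf (\<phi> ` S x) < Inf (\<phi> ` S x) + (1/2)^n" by simp
    then obtain v where "v \<in> \<phi> ` S x" "v < Inf (\<phi> ` S x) + (1/2)^n"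
      using cInf_lessD[of "\<phi> ` S x"] Smem[OF xK] by blast
    then have "\<exists>y. y \<in> S x \<and> \<phi> y \<le> Inf (\<phi> ` S x) + (1/2)^n" by force
    then show ?thesis unfolding nxt_def by (rule someI_ex)
  qed
  define xs where "xs = rec_nat x0 (\<lambda>n x. nxt x n)"
  have xs0: "xs 0 = x0" and xsS: "xs (Suc n) = nxt (xs n) n" for n unfolding xs_def by simp_all
  have xsK: "xs n \<in> K" for n
  proof (induction n)
    case 0 then show ?case using xs0 K(2) by simp
  next
    case (Suc n)
    have "nxt (xs n) n \<in> S (xs n)" using nxt[OF Suc.IH] by blast
    then show ?case unfolding xsS using SK by blast
  qed
  define T where "T n = S (xs n)" for n
  have Tsub: "T (Suc n) \<subseteq> T n" for n
  proof -
    have "nxt (xs n) n \<in> S (xs n)" using nxt[OF xsK[of n]] by blast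
    then show ?thesis unfolding T_def xsS by (rule Strans)
  qed
  have Tdec: "T n \<subseteq> T m" if "m \<le> n" for m n
    using that by (induction n rule: dec_induct) (use Tsub in blast)+
  have Tne: "T n \<noteq> {}" for n unfolding T_def using Smem xsK by blast
  have Tclosed: "closed (T n)" for n unfolding T_def by (rule Sclosed)
  have Tdiam: "\<alpha> * dist (xs (Suc n)) w \<le> (1/2)^n" if "w \<in> T (Suc n)" for n w
  proof -
    have wT: "w \<in> T n" using that Tsub by blast
    have "\<phi> w + \<alpha> * dist (xs (Suc n)) w \<le> \<phi> (xs (Suc n))" using that unfolding T_def S_def by simp
    also have "\<dots> \<le> Inf (\<phi> ` S (xs n)) + (1/2)^n" using nxt[OF xsK[of n]] xsS by simp
    also have "Inf (\<phi> ` S (xs n)) \<le> \<phi> w" using wT bdd unfolding T_def by (intro cInf_lower) auto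
    finally show ?thesis by simp
  qed
  have Tdist: "dist v w \<le> 2 * (1/2)^n / \<alpha>" if "v \<in> T (Suc n)" "w \<in> T (Suc n)" for n v w
  proof -
    have "dist v w \<le> dist (xs (Suc n)) v + dist (xs (Suc n)) w" by (rule dist_triangle3)
    also have "\<dots> \<le> (1/2)^n / \<alpha> + (1/2)^n / \<alpha>"
      using Tdiam[OF that(1)] Tdiam[OF that(2)] \<alpha> by (intro add_mono) (simp_all add: pos_le_divide_eq mult.commute)
    finally show ?thesis by simp
  qed
  have small: "\<exists>n. 2 * (1/2)^n / \<alpha> < e" if epos: "e > 0" for e
  proof -
    obtain n where "(1/2::real)^n < e * \<alpha> / 2" using real_arch_pow_inv[of "e * \<alpha> / 2" "1/2"] epos \<alpha> by auto
    then have "2 * (1/2)^n / \<alpha> < e" using \<alpha> by (simp add: field_simps)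
    then show ?thesis by blast
  qed
  obtain z where z: "\<And>n. z \<in> T n"
  proof (rule decreasing_closed_nest[of T])
    show "\<And>n. closed (T n)" by (rule Tclosed)
    show "\<And>n. T n \<noteq> {}" by (rule Tne)
    show "\<And>m n. m \<le> n \<Longrightarrow> T n \<subseteq> T m" by (rule Tdec)
    fix e :: real assume "e > 0"
    then obtain n where "2 * (1/2)^n / \<alpha> < e" using small by blast
    then show "\<exists>n. \<forall>x\<in>T n. \<forall>y\<in>T n. dist x y < e" using Tdist by (meson le_less_trans)
  qed blast
  have zK: "z \<in> K" and zle: "\<phi> z \<le> \<phi> x0"
  proof -
    have "z \<in> S x0" using z[of 0] unfolding T_def xs0 .
    then show "z \<in> K" "\<phi> z \<le> \<phi> x0" unfolding S_def using \<alpha> by (auto intro: order_trans[rotated])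
  qed
  have "\<phi> z \<le> \<phi> x + \<alpha> * dist x z" if xK: "x \<in> K" for x
  proof (rule ccontr)
    assume neg: "\<not> \<phi> z \<le> \<phi> x + \<alpha> * dist x z"
    then have "x \<in> S z" unfolding S_def using xK by (simp add: dist_commute)
    then have xT: "x \<in> T n" for n using Strans z unfolding T_def by blast
    have "dist x z = 0"
    proof (rule ccontr)
      assume "dist x z \<noteq> 0"
      then have "dist x z > 0" by simp
      then obtain n where "2 * (1/2)^n / \<alpha> < dist x z" using small by blast
      moreover have "dist x z \<le> 2 * (1/2)^n / \<alpha>" using Tdist xT z by blast
      ultimately show False by simp
    qed
    then have "x = z" by simp
    then show False using neg \<alpha> by simp
  qed
  then show ?thesis using zK zle by blast
qed


definition Fsup :: "(('a::real_normed_vector \<Rightarrow>\<^sub>L real) \<Rightarrow> ereal) \<Rightarrow> 'a \<Rightarrow> real" where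
  "Fsup g x = Sup {blinfun_apply y x - r | y r. g y \<le> ereal r}"

lemma Fsup_props:
  assumes P: "proper_fun g" and f: "fle g x K"
  shows "Fsup g x \<le> K" "fle g x (Fsup g x)"
proof -
  obtain y0 r0 where y0: "g y0 = ereal r0" by (rule proper_dom[OF P])
  let ?E = "{blinfun_apply y x - r | y r. g y \<le> ereal r}"
  have "blinfun_apply y0 x - r0 \<in> ?E" using y0 by fastforce
  then have ne: "?E \<noteq> {}" by blast
  have ub: "e \<le> K" if "e \<in> ?E" for e using that f unfolding fle_def by auto
  then have bdd: "bdd_above ?E" by (rule bdd_aboveI)
  show "Fsup g x \<le> K" unfolding Fsup_def using ne ub by (rule cSup_least)
  show "fle g x (Fsup g x)" unfolding fle_def Fsup_def
  proof (intro allI impI)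
    fix y r assume "g y \<le> ereal r"
    then have "blinfun_apply y x - r \<in> ?E" by blast
    then show "blinfun_apply y x - r \<le> Sup ?E" using bdd by (rule cSup_upper)
  qed
qed

lemma fle_mono: "fle g x K \<Longrightarrow> K \<le> K' \<Longrightarrow> fle g x K'"
  unfolding fle_def by force

lemma closed_fle:
  assumes h: "continuous_on UNIV h"
  shows "closed {x. fle g x (h x)}"
proof -
  have eq: "{x. fle g x (h x)} = (\<Inter>p\<in>{p. g (fst p) \<le> ereal (snd p)}. {x. blinfun_apply (fst p) x - snd p \<le> h x})"
    unfolding fle_def by auto
  have "closed {x. blinfun_apply (fst p) x - snd p \<le> h x}" for p
    by (intro closed_Collect_le continuous_on_diff continuous_on_const h
          linear_continuous_on[OF blinfun.bounded_linear_right])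
  then show ?thesis unfolding eq by (intro closed_INT) auto
qed


theorem mainTheorem8:
  fixes g :: "('a::banach \<Rightarrow>\<^sub>L real) \<Rightarrow> ereal"
    and xs :: "'a \<Rightarrow>\<^sub>L real"
  assumes "proper_fun g" and "convex_ereal g" and "weak_star_lsc g"
    and "(INF y. g y) < g xs"
  shows "\<exists>zs z. zs \<in> dom_fun g \<and> z \<in> subdiff_X g zs \<and> g zs < g xs
                \<and> blinfun_apply (xs - zs) z > 0"
proof -
  note P = assms(1)
  obtain y0 where y0: "g y0 < g xs" using assms(4) by (auto simp: INF_less_iff)
  have "g y0 \<noteq> \<infinity>" using y0 by auto
  moreover have "g y0 \<noteq> -\<infinity>" using P unfolding proper_fun_def by blast
  ultimately obtain r0 where r0: "g y0 = ereal r0" by (cases "g y0") auto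
  from ereal_dense2[of "ereal r0" "g xs"] obtain a where a: "ereal r0 < ereal a" "ereal a < g xs"
    using y0 r0 by (auto simp del: ereal_less_eq)
  have r0a: "r0 < a" using a(1) by simp
  from A_lemma[OF assms(1-3) a(2)] obtain x1 K1 where x1: "fle g x1 K1" "a < blinfun_apply xs x1 - K1"
    by blast
  define F where "F = Fsup g"
  have Fle: "F x \<le> K" and Ffle: "fle g x (F x)" if "fle g x K" for x K
    using Fsup_props[OF P that] unfolding F_def by auto
  have Flow: "blinfun_apply y0 x - r0 \<le> F x" if "fle g x K" for x K
    using Ffle[OF that] r0 unfolding fle_def by auto
  have x1F: "F x1 - blinfun_apply xs x1 < -a" using Fle[OF x1(1)] x1(2) by simp
  have x1nz: "x1 \<noteq> 0"
  proof
    assume "x1 = 0"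
    then have "- r0 \<le> F x1" using Flow[OF x1(1)] by simp
    then show False using x1F \<open>x1 = 0\<close> r0a by simp
  qed
  define M where "M = (-a - (F x1 - blinfun_apply xs x1)) / (norm x1 + 1)"
  have Mpos: "M > 0" unfolding M_def using x1F by (intro divide_pos_pos) (simp_all add: add_nonneg_pos)
  define \<alpha> where "\<alpha> = M / 2"
  have \<alpha>: "\<alpha> > 0" "\<alpha> < M" unfolding \<alpha>_def using Mpos by simp_all
  define R where "R = 2 * norm x1 + 1"
  have R: "R > 0" "norm x1 < R" "norm (2 *\<^sub>R x1) < R" unfolding R_def by (simp_all add: add_nonneg_pos)
  define \<phi> where "\<phi> x = F x - blinfun_apply xs x + M * norm x" for x
  define P1 where "P1 = \<phi> x1"
  have P1a: "P1 < -a"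
  proof -
    have "M * (norm x1 + 1) = -a - (F x1 - blinfun_apply xs x1)" unfolding M_def
      using add_nonneg_pos[OF norm_ge_zero[of x1] zero_less_one] by simp
    moreover have "M * norm x1 < M * (norm x1 + 1)" using Mpos by simp
    ultimately show ?thesis unfolding P1_def \<phi>_def by simp
  qed
  define KS where "KS = {x. norm x \<le> R \<and> fle g x (P1 + blinfun_apply xs x - M * norm x)}"
  have contH: "continuous_on UNIV (\<lambda>x. c + blinfun_apply xs x - M * norm x)" for c
    by (intro continuous_on_diff continuous_on_add continuous_on_const continuous_on_mult
        continuous_on_norm_id linear_continuous_on[OF blinfun.bounded_linear_right])
  have KSeq: "KS = cball 0 R \<inter> {x. fle g x (P1 + blinfun_apply xs x - M * norm x)}"
    unfolding KS_def by auto
  have KSc: "closed KS" unfolding KSeq by (intro closed_Int closed_cball closed_fle contH)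
  have x1KS: "x1 \<in> KS"
  proof -
    have "P1 + blinfun_apply xs x1 - M * norm x1 = F x1" unfolding P1_def \<phi>_def by simp
    then show ?thesis unfolding KS_def using Ffle[OF x1(1)] R by simp
  qed
  have KSfle: "fle g x (F x)" and KSphi: "\<phi> x \<le> P1" if "x \<in> KS" for x
  proof -
    have f: "fle g x (P1 + blinfun_apply xs x - M * norm x)" using that unfolding KS_def by simp
    show "fle g x (F x)" by (rule Ffle[OF f])
    show "\<phi> x \<le> P1" using Fle[OF f] unfolding \<phi>_def by simp
  qed
  define m where "m = - norm y0 * R - r0 - norm xs * R"
  have bd: "m \<le> \<phi> x" if "x \<in> KS" for x
  proof -
    have nx: "norm x \<le> R" using that unfolding KS_def by simp
    have "- (norm y0 * norm x) \<le> blinfun_apply y0 x" using norm_blinfun[of y0 x] by simp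
    moreover have "norm y0 * norm x \<le> norm y0 * R" using nx by (simp add: mult_left_mono)
    moreover have "blinfun_apply xs x \<le> norm xs * norm x" using norm_blinfun[of xs x] by simp
    moreover have "norm xs * norm x \<le> norm xs * R" using nx by (simp add: mult_left_mono)
    moreover have "blinfun_apply y0 x - r0 \<le> F x" using Flow[OF KSfle[OF that]] .
    moreover have "0 \<le> M * norm x" using Mpos by simp
    ultimately show ?thesis unfolding m_def \<phi>_def by linarith
  qed
  have sub: "closed {x\<in>KS. \<phi> x \<le> c}" for c
  proof -
    have "{x\<in>KS. \<phi> x \<le> c} = KS \<inter> {x. fle g x (c + blinfun_apply xs x - M * norm x)}"
    proof (intro equalityI subsetI)
      fix x assume x: "x \<in> {x\<in>KS. \<phi> x \<le> c}"
      then have "F x \<le> c + blinfun_apply xs x - M * norm x" unfolding \<phi>_def by simp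
      then show "x \<in> KS \<inter> {x. fle g x (c + blinfun_apply xs x - M * norm x)}"
        using x KSfle fle_mono by blast
    next
      fix x assume x: "x \<in> KS \<inter> {x. fle g x (c + blinfun_apply xs x - M * norm x)}"
      then have "F x \<le> c + blinfun_apply xs x - M * norm x" using Fle by blast
      then show "x \<in> {x\<in>KS. \<phi> x \<le> c}" using x unfolding \<phi>_def by simp
    qed
    then show ?thesis by (simp add: closed_Int KSc closed_fle contH)
  qed
  obtain z where zKS: "z \<in> KS" and zle: "\<phi> z \<le> \<phi> x1" and Ek: "\<And>x. x \<in> KS \<Longrightarrow> \<phi> z \<le> \<phi> x + \<alpha> * dist x z"
    using ekeland[OF KSc x1KS bd sub \<alpha>(1)] by blast
  define fz where "fz = F z"
  have zfle: "fle g z fz" unfolding fz_def by (rule KSfle[OF zKS])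
  have znz: "z \<noteq> 0"
  proof
    assume z0: "z = 0"
    have "- r0 \<le> F z" using Flow[OF zfle] z0 by simp
    then have "-r0 \<le> \<phi> z" using z0 unfolding \<phi>_def by simp
    then show False using zle P1a r0a unfolding P1_def by simp
  qed
  have zR: "norm z \<le> R" using zKS unfolding KS_def by simp

  define h where "h x = fz + blinfun_apply xs x - blinfun_apply xs z - M * norm x + M * norm z - \<alpha> * norm (x - z)" for x
  define q :: "'a \<times> real \<Rightarrow> real" where "q v = norm (fst v) + \<bar>snd v\<bar>" for v
  define C :: "('a \<times> real) set" where "C = {v. fle g (fst v) (snd v)}"
  define U :: "('a \<times> real) set" where "U = {v. norm (fst v) < R \<and> snd v < h (fst v)}"
  define N where "N = 1 + norm xs + M + \<alpha>"
  have Npos: "N > 0" unfolding N_def using Mpos \<alpha> by (simp add: add_pos_nonneg)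
  define \<delta> where "\<delta> = min R (1 / N)"
  have \<delta>: "\<delta> > 0" unfolding \<delta>_def using R Npos by simp
  define u0 where "u0 = (0::'a, fz - blinfun_apply xs z - 1)"
  have qadd: "q (v + w) \<le> q v + q w" for v w
    unfolding q_def using norm_triangle_ineq[of "fst v" "fst w"] abs_triangle_ineq[of "snd v" "snd w"] by simp
  have qsc: "q (t *\<^sub>R v) = \<bar>t\<bar> * q v" for t v unfolding q_def by (simp add: abs_mult algebra_simps)
  have Cc: "convex C" unfolding convex_def C_def
  proof (intro ballI allI impI, unfold mem_Collect_eq)
    fix v w and a b :: real
    assume v: "fle g (fst v) (snd v)" and w: "fle g (fst w) (snd w)" and ab: "0 \<le> a" "0 \<le> b" "a + b = 1"
    show "fle g (fst (a *\<^sub>R v + b *\<^sub>R w)) (snd (a *\<^sub>R v + b *\<^sub>R w))" unfolding fle_def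
    proof (intro allI impI)
      fix y r assume yr: "g y \<le> ereal r"
      have "a * (blinfun_apply y (fst v) - r) \<le> a * snd v" using v yr ab unfolding fle_def by (intro mult_left_mono) auto
      moreover have "b * (blinfun_apply y (fst w) - r) \<le> b * snd w" using w yr ab unfolding fle_def by (intro mult_left_mono) auto
      moreover have "blinfun_apply y (fst (a *\<^sub>R v + b *\<^sub>R w)) - r
          = a * (blinfun_apply y (fst v) - r) + b * (blinfun_apply y (fst w) - r)"
        using ab by (simp add: algebra_simps flip: distrib_right)
      ultimately show "blinfun_apply y (fst (a *\<^sub>R v + b *\<^sub>R w)) - r \<le> snd (a *\<^sub>R v + b *\<^sub>R w)" by simp
    qed
  qed
  have zC: "(z, fz) \<in> C" unfolding C_def using zfle by simp
  have hconc: "a * h x + b * h y \<le> h (a *\<^sub>R x + b *\<^sub>R y)" if ab: "0 \<le> a" "0 \<le> b" "a + b = 1" for a b x y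
  proof -
    have b: "b = 1 - a" using ab by simp
    have n1: "norm (a *\<^sub>R x + b *\<^sub>R y) \<le> a * norm x + b * norm y"
      using norm_triangle_ineq[of "a *\<^sub>R x" "b *\<^sub>R y"] ab by simp
    have "a *\<^sub>R x + b *\<^sub>R y - z = a *\<^sub>R (x - z) + b *\<^sub>R (y - z)" using ab by (simp add: algebra_simps flip: scaleR_add_left)
    then have n2: "norm (a *\<^sub>R x + b *\<^sub>R y - z) \<le> a * norm (x - z) + b * norm (y - z)"
      using norm_triangle_ineq[of "a *\<^sub>R (x - z)" "b *\<^sub>R (y - z)"] ab by simp
    have m1: "M * norm (a *\<^sub>R x + b *\<^sub>R y) \<le> M * (a * norm x + b * norm y)" using n1 Mpos by (simp add: mult_left_mono)
    have m2: "\<alpha> * norm (a *\<^sub>R x + b *\<^sub>R y - z) \<le> \<alpha> * (a * norm (x - z) + b * norm (y - z))"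
      using n2 \<alpha> by (simp add: mult_left_mono)
    have eq: "a * h x + b * h y = fz - blinfun_apply xs z + M * norm z + blinfun_apply xs (a *\<^sub>R x + b *\<^sub>R y)
        - M * (a * norm x + b * norm y) - \<alpha> * (a * norm (x - z) + b * norm (y - z))"
      unfolding h_def b by (simp add: algebra_simps)
    show ?thesis unfolding eq using m1 m2 unfolding h_def by simp
  qed
  have Uc: "convex U" unfolding convex_def U_def
  proof (intro ballI allI impI, unfold mem_Collect_eq)
    fix v w and a b :: real
    assume v: "norm (fst v) < R \<and> snd v < h (fst v)" and w: "norm (fst w) < R \<and> snd w < h (fst w)"
      and ab: "0 \<le> a" "0 \<le> b" "a + b = 1"
    have "norm (fst (a *\<^sub>R v + b *\<^sub>R w)) \<le> a * norm (fst v) + b * norm (fst w)"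
      using norm_triangle_ineq[of "a *\<^sub>R fst v" "b *\<^sub>R fst w"] ab by simp
    also have "\<dots> \<le> a * max (norm (fst v)) (norm (fst w)) + b * max (norm (fst v)) (norm (fst w))"
      using ab by (intro add_mono mult_left_mono) auto
    also have "\<dots> = max (norm (fst v)) (norm (fst w))" using ab by (simp flip: distrib_right)
    also have "\<dots> < R" using v w by simp
    finally have nR: "norm (fst (a *\<^sub>R v + b *\<^sub>R w)) < R" .
    define d where "d = min (h (fst v) - snd v) (h (fst w) - snd w)"
    have d: "d > 0" unfolding d_def using v w by simp
    have "a * snd v + b * snd w \<le> a * (h (fst v) - d) + b * (h (fst w) - d)"
      using ab unfolding d_def by (intro add_mono mult_left_mono) auto
    also have "\<dots> = a * h (fst v) + b * h (fst w) - d" using ab by (simp add: algebra_simps flip: distrib_right)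
    also have "\<dots> < a * h (fst v) + b * h (fst w)" using d by simp
    also have "\<dots> \<le> h (a *\<^sub>R fst v + b *\<^sub>R fst w)" by (rule hconc[OF ab])
    finally show "norm (fst (a *\<^sub>R v + b *\<^sub>R w)) < R \<and> snd (a *\<^sub>R v + b *\<^sub>R w) < h (fst (a *\<^sub>R v + b *\<^sub>R w))"
      using nR by simp
  qed
  have hlow: "fz - blinfun_apply xs z - (norm xs + M + \<alpha>) * norm x \<le> h x" for x
  proof -
    have "- (norm xs * norm x) \<le> blinfun_apply xs x" using norm_blinfun[of xs x] by simp
    moreover have "norm (x - z) \<le> norm x + norm z" by (rule norm_triangle_ineq4)
    then have "\<alpha> * norm (x - z) \<le> \<alpha> * norm x + \<alpha> * norm z" using \<alpha> by (simp add: mult_left_mono flip: distrib_left)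
    moreover have "\<alpha> * norm z \<le> M * norm z" using \<alpha> by (simp add: mult_right_mono)
    ultimately show ?thesis unfolding h_def by (simp add: algebra_simps)
  qed
  have u0U: "u0 \<in> U"
  proof -
    have "fz - blinfun_apply xs z - 1 < fz - blinfun_apply xs z" by simp
    also have "\<dots> \<le> h 0" using hlow[of 0] by simp
    finally show ?thesis unfolding U_def u0_def using R by simp
  qed
  have ball: "u0 + v \<in> U" if qv: "q v < \<delta>" for v
  proof -
    have nv: "norm (fst v) + \<bar>snd v\<bar> < \<delta>" using qv unfolding q_def .
    then have "norm (fst v) < R" unfolding \<delta>_def using abs_ge_zero[of "snd v"] by linarith
    moreover have "snd v - 1 < - ((norm xs + M + \<alpha>) * norm (fst v))"
    proof -
      have "N * (norm (fst v) + \<bar>snd v\<bar>) < N * (1 / N)"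
        using nv Npos unfolding \<delta>_def by (intro mult_strict_left_mono) auto
      then have "N * (norm (fst v) + \<bar>snd v\<bar>) < 1" using Npos by simp
      moreover have "(norm xs + M + \<alpha>) * norm (fst v) + \<bar>snd v\<bar> \<le> N * (norm (fst v) + \<bar>snd v\<bar>)"
        unfolding N_def using Mpos \<alpha> by (simp add: algebra_simps)
      ultimately show ?thesis by linarith
    qed
    then have "fz - blinfun_apply xs z - 1 + snd v < h (fst v)" using hlow[of "fst v"] by linarith
    ultimately show ?thesis unfolding U_def u0_def by simp
  qed
  have disj: "C \<inter> U = {}"
  proof -
    have False if vC: "v \<in> C" and vU: "v \<in> U" for v
    proof -
      obtain x r where v: "v = (x, r)" by (cases v)
      have fx: "fle g x r" using vC v unfolding C_def by simp
      have xR: "norm x < R" and rh: "r < h x" using vU v unfolding U_def by auto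
      show False
      proof (cases "fle g x (P1 + blinfun_apply xs x - M * norm x)")
        case True
        then have xKS: "x \<in> KS" unfolding KS_def using xR by simp
        have "\<phi> z \<le> \<phi> x + \<alpha> * dist x z" by (rule Ek[OF xKS])
        then have "h x \<le> F x" unfolding h_def \<phi>_def fz_def dist_norm by simp
        moreover have "F x \<le> r" by (rule Fle[OF fx])
        ultimately show False using rh by simp
      next
        case False
        then have "r > P1 + blinfun_apply xs x - M * norm x" using fx fle_mono by (meson not_le)
        moreover have "\<phi> z \<le> P1" using zle unfolding P1_def .
        moreover have "0 \<le> \<alpha> * norm (x - z)" using \<alpha> by simp
        ultimately have "h x \<le> r" unfolding h_def \<phi>_def fz_def by simp
        then show False using rh by simp
      qed
    qed
    then show ?thesis by blast
  qed
  obtain L \<tau> where L: "linear L" "\<And>v. \<bar>L v\<bar> \<le> q v / \<delta>" "\<tau> > 0"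
    "\<And>c u. c \<in> C \<Longrightarrow> u \<in> U \<Longrightarrow> L c \<le> L u" "\<And>c. c \<in> C \<Longrightarrow> L c + \<tau> \<le> L u0"
    using sep_lemma[OF qadd qsc Cc zC Uc u0U \<delta> ball disj] by blast
  define s where "s = L (0, 1)"
  define w0 where "w0 x = L (x, 0)" for x
  have Lsplit: "L v = w0 (fst v) + snd v * s" for v
  proof -
    have "v = (fst v, 0) + snd v *\<^sub>R (0, 1)" by simp
    then have "L v = L ((fst v, 0) + snd v *\<^sub>R (0, 1))" by metis
    also have "\<dots> = w0 (fst v) + snd v * s" unfolding s_def w0_def linear_add[OF L(1)] linear_scale[OF L(1)] by simp
    finally show ?thesis .
  qed
  have w0add: "w0 (x + y) = w0 x + w0 y" for x y
    unfolding w0_def using linear_add[OF L(1), of "(x,0)" "(y,0)"] by simp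
  have w0sc: "w0 (t *\<^sub>R x) = t *\<^sub>R w0 x" for t x
    unfolding w0_def using linear_scale[OF L(1), of t "(x,0)"] by simp
  have w0bd: "norm (w0 x) \<le> norm x * (1 / \<delta>)" for x
    using L(2)[of "(x, 0)"] unfolding w0_def q_def by simp
  have blw0: "bounded_linear w0" by (rule bounded_linear_intro[OF w0add w0sc w0bd])
  have Lu0: "L u0 = fz - blinfun_apply xs z - 1 - (fz - blinfun_apply xs z - 1) + (fz - blinfun_apply xs z - 1) * s"
    using Lsplit[of u0] linear_0[OF bounded_linear.linear[OF blw0]] unfolding u0_def by simp
  have Lu0': "L u0 = (fz - blinfun_apply xs z - 1) * s" using Lu0 by simp
  have w00: "w0 0 = 0" using linear_0[OF bounded_linear.linear[OF blw0]] .
  have s_nonpos: "s \<le> 0"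
  proof (rule ccontr)
    assume "\<not> s \<le> 0"
    then have sp: "s > 0" by simp
    define t where "t = max 0 ((L u0 - w0 z - fz * s) / s + 1)"
    have "(z, fz + t) \<in> C" unfolding C_def using fle_mono[OF zfle] t_def by simp
    then have "L (z, fz + t) \<le> L u0" using L(5) L(3) by fastforce
    then have "w0 z + (fz + t) * s \<le> L u0" using Lsplit[of "(z, fz + t)"] by simp
    moreover have "t * s \<ge> ((L u0 - w0 z - fz * s) / s + 1) * s"
      using sp unfolding t_def by (intro mult_right_mono) auto
    moreover have "((L u0 - w0 z - fz * s) / s + 1) * s = L u0 - w0 z - fz * s + s"
      using sp by (simp add: field_simps)
    ultimately show False using sp by (simp add: algebra_simps)
  qed
  have s_neg: "s < 0"
  proof (rule ccontr)
    assume "\<not> s < 0"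
    then have s0: "s = 0" using s_nonpos by simp
    have x1C: "(x1, F x1) \<in> C" unfolding C_def using Ffle[OF x1(1)] by simp
    have "w0 x1 + \<tau> \<le> 0" using L(5)[OF x1C] Lsplit[of "(x1, F x1)"] Lu0' s0 by simp
    moreover have "(2 *\<^sub>R x1, h (2 *\<^sub>R x1) - 1) \<in> U" unfolding U_def using R by simp
    then have "L (x1, F x1) \<le> L (2 *\<^sub>R x1, h (2 *\<^sub>R x1) - 1)" using L(4)[OF x1C] by blast
    then have "w0 x1 \<le> w0 (2 *\<^sub>R x1)" using Lsplit[of "(x1, F x1)"] Lsplit[of "(2 *\<^sub>R x1, h (2 *\<^sub>R x1) - 1)"] s0 by simp
    then have "w0 x1 \<le> 2 * w0 x1" using w0sc[of 2 x1] by simp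
    ultimately show False using L(3) by simp
  qed
  define zs where "zs = (-1 / s) *\<^sub>R Blinfun w0"
  have zsap: "blinfun_apply zs x = w0 x / (-s)" for x
    unfolding zs_def using bounded_linear_Blinfun_apply[OF blw0] by simp
  have key: "blinfun_apply zs x' - r' \<le> blinfun_apply zs x - r" if "fle g x' r'" "norm x < R" "r < h x" for x' r' x r
  proof -
    have "(x', r') \<in> C" "(x, r) \<in> U" using that unfolding C_def U_def by auto
    then have "L (x', r') \<le> L (x, r)" by (rule L(4))
    then have "w0 x' + r' * s \<le> w0 x + r * s" using Lsplit[of "(x', r')"] Lsplit[of "(x, r)"] by simp
    then have "(w0 x' + r' * s) / (-s) \<le> (w0 x + r * s) / (-s)" using s_neg by (intro divide_right_mono) auto
    then show ?thesis unfolding zsap using s_neg by (simp add: field_simps)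
  qed
  have subgr: "blinfun_apply zs x' - r' \<le> blinfun_apply zs z - fz" if fx: "fle g x' r'" for x' r'
  proof (rule field_le_epsilon)
    fix e :: real assume e: "e > 0"
    define E where "E = - blinfun_apply zs z + blinfun_apply xs z - M * norm z + \<alpha> * norm z"
    define t where "t = min 1 (e / (2 * (\<bar>E\<bar> + 1)))"
    have t: "t > 0" "t \<le> 1" unfolding t_def using e by (simp_all add: add_pos_nonneg)
    have tE: "t * E \<le> e / 2"
    proof -
      have "t * E \<le> t * \<bar>E\<bar>" using t by (simp add: mult_left_mono)
      also have "\<dots> \<le> (e / (2 * (\<bar>E\<bar> + 1))) * \<bar>E\<bar>" unfolding t_def by (intro mult_right_mono) auto
      also have "\<dots> \<le> e / 2"
      proof -
        have "(e / (2 * (\<bar>E\<bar> + 1))) * \<bar>E\<bar> = (e / 2) * (\<bar>E\<bar> / (\<bar>E\<bar> + 1))" by simp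
        also have "\<dots> \<le> (e / 2) * 1" using e by (intro mult_left_mono) auto
        finally show ?thesis by simp
      qed
      finally show ?thesis .
    qed
    define x where "x = (1 - t) *\<^sub>R z"
    have xR: "norm x < R"
    proof -
      have "norm x = (1 - t) * norm z" unfolding x_def using t by simp
      also have "\<dots> \<le> (1 - t) * R" using zR t by (intro mult_left_mono) auto
      also have "\<dots> < R" using t R by simp
      finally show ?thesis .
    qed
    have "blinfun_apply zs x' - r' \<le> blinfun_apply zs x - (h x - e / 2)"
      using key[OF fx xR] e by simp
    also have "blinfun_apply zs x - (h x - e / 2) = blinfun_apply zs z - fz + t * E + e / 2"
    proof -
      have nx: "norm x = (1 - t) * norm z" unfolding x_def using t by simp
      have nxz: "norm (x - z) = t * norm z" unfolding x_def using t by (simp add: algebra_simps)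
      show ?thesis unfolding h_def nx nxz E_def unfolding x_def by (simp add: algebra_simps)
    qed
    also have "\<dots> \<le> blinfun_apply zs z - fz + e" using tE by simp
    finally show "blinfun_apply zs x' - r' \<le> blinfun_apply zs z - fz + e" .
  qed
  have pos: "blinfun_apply zs z \<le> blinfun_apply xs z - (M - \<alpha>) * norm z"
  proof (rule field_le_epsilon)
    fix e :: real assume e: "e > 0"
    have "blinfun_apply zs z - fz \<le> blinfun_apply zs 0 - (h 0 - e)"
      using key[OF zfle, of 0 "h 0 - e"] R(1) e by simp
    then show "blinfun_apply zs z \<le> blinfun_apply xs z - (M - \<alpha>) * norm z + e"
      unfolding h_def by (simp add: algebra_simps)
  qed
  have posz: "blinfun_apply (xs - zs) z > 0"
  proof -
    have "(M - \<alpha>) * norm z > 0" using \<alpha> znz by simp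
    then show ?thesis using pos by simp
  qed
  have gzs: "g zs \<le> ereal (blinfun_apply zs z - fz)"
  proof (rule ccontr)
    assume "\<not> ?thesis"
    then have "ereal (blinfun_apply zs z - fz) < g zs" by simp
    from A_lemma[OF assms(1-3) this] obtain x K where "fle g x K" "blinfun_apply zs z - fz < blinfun_apply zs x - K"
      by blast
    then show False using subgr by fastforce
  qed
  have "g zs \<noteq> -\<infinity>" using P unfolding proper_fun_def by blast
  then obtain gz where gz: "g zs = ereal gz" using gzs by (cases "g zs") auto
  have gzle: "gz \<le> blinfun_apply zs z - fz" using gzs gz by simp
  have dom: "zs \<in> dom_fun g" unfolding dom_fun_def using gz by simp
  have sd: "z \<in> subdiff_X g zs" unfolding subdiff_X_def
  proof (intro CollectI allI)
    fix ys
    show "ereal (blinfun_apply (ys - zs) z) \<le> g ys - g zs"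
    proof (cases "g ys")
      case (real r)
      then have "blinfun_apply ys z - r \<le> fz" using zfle unfolding fle_def by simp
      then show ?thesis using real gz gzle by simp
    next
      case PInf then show ?thesis using gz by simp
    next
      case MInf then show ?thesis using P unfolding proper_fun_def by blast
    qed
  qed
  have lt: "g zs < g xs"
  proof (cases "g xs")
    case (real r)
    then have "blinfun_apply xs z - r \<le> fz" using zfle unfolding fle_def by simp
    then show ?thesis using real gz gzle posz by simp
  next
    case PInf then show ?thesis using gz by simp
  next
    case MInf then show ?thesis using P unfolding proper_fun_def by blast
  qed
  show ?thesis using dom sd lt posz by blast
qed


end
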